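(* Let $R>0$, $n\in\mathbb N$, $Q,K,V\in\mathbb R^{k\times d}$, $A:=K^\top Q/\sqrt k$. Let $f^m$ be masked self-attention and $F^m$ mean-field masked self-attention with parameters $(A,V)$. Then $$\mathrm{Lip}^{\|\cdot\|_F}\big(f^m_{|B_R^n}\big)\le\mathrm{Lip}^{d_2}\big(F^m_{|\mathcal P([0,1]\times B_R)}\big).$$
   Context: Masked self-attention: for $X=(x_1,\dots,x_n)\in(\mathbb R^d)^n$, $f^m(X)_i=V\sum_{j=1}^iP_{ij}x_j$ with $P_{ij}=\exp(x_i^\top A^\top x_j)/\sum_{l=1}^i\exp(x_i^\top A^\top x_l)$ for $j\le i$. $\mathrm{Lip}^{\|\cdot\|_F}(f^m_{|\mathcal X})=\sup_{X\ne Y\in\mathcal X}\|f^m(X)-f^m(Y)\|_F/\|X-Y\|_F$ with Frobenius norm $\|X\|_F=(\sum_i|x_i|^2)^{1/2}$. $B_R\subset\mathbb R^d$ is the closed ball of center 0, radius $R$. Mean-field masked self-attention: for a compactly supported probability measure $\bar\mu$ on $[0,1]\times\mathbb R^d$, $F^m(\bar\mu):=(\Gamma_{\bar\mu})_\sharp\bar\mu$ (pushforward), where $\Gamma_{\bar\mu}(s,x)=\Big(s,\dfrac{\int\exp(x^\top A^\top y)Vy\mathbf 1_{\tau\le s}d\bar\mu(\tau,y)}{\int\exp(x^\top A^\top y)\mathbf 1_{\tau\le s}d\bar\mu(\tau,y)}\Big)$. Distance $d_p$ ($p\ge1$): if $\bar\mu,\bar\nu$ have the same first marginal $\theta$ on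 $[0,1]$, disintegrate $d\bar\mu(\tau,x)=d\theta(\tau)d\mu^\tau(x)$, $d\bar\nu(\tau,x)=d\theta(\tau)d\nu^\tau(x)$ and set $d_p(\bar\mu,\bar\nu)=\big(\int_0^1W_p(\mu^\tau,\nu^\tau)^pd\theta(\tau)\big)^{1/p}$, where $W_p$ is the $p$-Wasserstein distance; otherwise $d_p(\bar\mu,\bar\nu)=+\infty$. $\mathcal P([0,1]\times B_R)$ is the set of probability measures supported in $[0,1]\times B_R$, and $\mathrm{Lip}^{d_2}(F^m_{|\mathcal X})$ is the supremum of $d_2(F^m(\bar\mu),F^m(\bar\nu))/d_2(\bar\mu,\bar\nu)$ over pairs $\bar\mu\ne\bar\nu$ in $\mathcal X$ with the same first marginal. *)

theory Defs
  imports "HOL-Probability.Probability"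
begin

definition attn_A :: "real^'d^'k \<Rightarrow> real^'d^'k \<Rightarrow> real^'d^'d" where
  "attn_A Q K = (1 / sqrt (real CARD('k))) *\<^sub>R (transpose K ** Q)"

text \<open>Sequences X = (x_1,...,x_n) are lists of length n (0-indexed).
  x_i^T A^T x_j = (A x_i) . x_j.\<close>
definition attn_P :: "real^'d^'d \<Rightarrow> (real^'d) list \<Rightarrow> nat \<Rightarrow> nat \<Rightarrow> real" where
  "attn_P A X i j =
     exp ((A *v (X!i)) \<bullet> (X!j)) / (\<Sum>l\<le>i. exp ((A *v (X!i)) \<bullet> (X!l)))"

definition masked_sa :: "real^'d^'d \<Rightarrow> real^'d^'k \<Rightarrow> (real^'d) list \<Rightarrow> (real^'k) list" where
  "masked_sa A V X = map (\<lambda>i. V *v (\<Sum>j\<le>i. attn_P A X i j *\<^sub>R (X!j))) [0..<length X]"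

definition frob_norm :: "('a::real_normed_vector) list \<Rightarrow> real" where
  "frob_norm X = sqrt (\<Sum>x\<leftarrow>X. (norm x)^2)"

definition list_diff :: "('a::ab_group_add) list \<Rightarrow> 'a list \<Rightarrow> 'a list" where
  "list_diff X Y = map2 (-) X Y"

definition ball_tuples :: "real \<Rightarrow> nat \<Rightarrow> (real^'d) list set" where
  "ball_tuples R n = {X. length X = n \<and> set X \<subseteq> cball 0 R}"

definition lip_frob ::
  "(('a::real_normed_vector) list \<Rightarrow> ('b::real_normed_vector) list) \<Rightarrow> 'a list set \<Rightarrow> ennreal" where
  "lip_frob f S = (SUP (X, Y) \<in> {(X, Y). X \<in> S \<and> Y \<in> S \<and> X \<noteq> Y}.
      ennreal (frob_norm (list_diff (f X) (f Y)) / frob_norm (list_diff X Y)))"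

definition Gamma_mf :: "real^'d^'d \<Rightarrow> real^'d^'k \<Rightarrow> (real \<times> (real^'d)) measure
    \<Rightarrow> real \<times> (real^'d) \<Rightarrow> real \<times> (real^'k)" where
  "Gamma_mf A V \<mu> = (\<lambda>(s, x).
     (s, (1 / (integral\<^sup>L \<mu> (\<lambda>(\<tau>, y). exp ((A *v x) \<bullet> y) * indicator {..s} \<tau>))) *\<^sub>R
         integral\<^sup>L \<mu> (\<lambda>(\<tau>, y). (exp ((A *v x) \<bullet> y) * indicator {..s} \<tau>) *\<^sub>R (V *v y))))"

definition mf_masked_sa :: "real^'d^'d \<Rightarrow> real^'d^'k \<Rightarrow> (real \<times> (real^'d)) measure
    \<Rightarrow> (real \<times> (real^'k)) measure" where
  "mf_masked_sa A V \<mu> = distr \<mu> borel (Gamma_mf A V \<mu>)"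

definition prob_supp :: "real \<Rightarrow> (real \<times> (real^'d)) measure set" where
  "prob_supp R = {\<mu>. sets \<mu> = sets borel \<and> prob_space \<mu> \<and>
                     emeasure \<mu> ({0..1} \<times> cball 0 R) = 1}"

definition enn_root :: "real \<Rightarrow> ennreal \<Rightarrow> ennreal" where
  "enn_root p x = (if x = \<top> then \<top> else ennreal (enn2real x powr (1 / p)))"

definition couplings :: "('a::euclidean_space) measure \<Rightarrow> 'a measure \<Rightarrow> ('a \<times> 'a) measure set" where
  "couplings \<mu> \<nu> = {\<pi>. sets \<pi> = sets borel \<and> prob_space \<pi> \<and>
                       distr \<pi> borel fst = \<mu> \<and> distr \<pi> borel snd = \<nu>}"

definition wasserstein_pow :: "real \<Rightarrow> ('a::euclidean_space) measure \<Rightarrow> 'a measure \<Rightarrow> ennreal" where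
  "wasserstein_pow p \<mu> \<nu> =
     (INF \<pi> \<in> couplings \<mu> \<nu>. \<integral>\<^sup>+ (x, y). ennreal (norm (x - y) powr p) \<partial>\<pi>)"

definition wasserstein :: "real \<Rightarrow> ('a::euclidean_space) measure \<Rightarrow> 'a measure \<Rightarrow> ennreal" where
  "wasserstein p \<mu> \<nu> = enn_root p (wasserstein_pow p \<mu> \<nu>)"

definition first_marginal :: "(real \<times> 'a::euclidean_space) measure \<Rightarrow> real measure" where
  "first_marginal \<mu> = distr \<mu> borel fst"

definition is_disintegration ::
  "(real \<times> 'a::euclidean_space) measure \<Rightarrow> (real \<Rightarrow> 'a measure) \<Rightarrow> bool" where
  "is_disintegration \<mu> \<kappa> \<longleftrightarrow>
     (\<forall>\<tau>. sets (\<kappa> \<tau>) = sets borel \<and> prob_space (\<kappa> \<tau>)) \<and>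
     (\<forall>B \<in> sets borel. (\<lambda>\<tau>. emeasure (\<kappa> \<tau>) B) \<in> borel_measurable borel) \<and>
     (\<forall>S \<in> sets borel. \<forall>B \<in> sets borel.
        emeasure \<mu> (S \<times> B) = (\<integral>\<^sup>+ \<tau>. indicator S \<tau> * emeasure (\<kappa> \<tau>) B \<partial>(first_marginal \<mu>)))"

definition disint :: "(real \<times> 'a::euclidean_space) measure \<Rightarrow> real \<Rightarrow> 'a measure" where
  "disint \<mu> = (SOME \<kappa>. is_disintegration \<mu> \<kappa>)"

definition d_p :: "real \<Rightarrow> (real \<times> 'a::euclidean_space) measure \<Rightarrow> (real \<times> 'a) measure \<Rightarrow> ennreal" where
  "d_p p \<mu> \<nu> =
     (if first_marginal \<mu> = first_marginal \<nu> then
        enn_root p (\<integral>\<^sup>+ \<tau>. wasserstein_pow p (disint \<mu> \<tau>) (disint \<nu> \<tau>) \<partial>(first_marginal \<mu>))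
      else \<top>)"

definition lip_d2 :: "((real \<times> 'a::euclidean_space) measure \<Rightarrow> (real \<times> 'b::euclidean_space) measure)
    \<Rightarrow> (real \<times> 'a) measure set \<Rightarrow> ennreal" where
  "lip_d2 F S = (SUP (\<mu>, \<nu>) \<in> {(\<mu>, \<nu>). \<mu> \<in> S \<and> \<nu> \<in> S \<and> \<mu> \<noteq> \<nu> \<and>
                                   first_marginal \<mu> = first_marginal \<nu>}.
      d_p 2 (F \<mu>) (F \<nu>) / d_p 2 \<mu> \<nu>)"

end

theory Submission
  imports Defs
begin


definition tt :: "nat \<Rightarrow> nat \<Rightarrow> real" where "tt n i = real i / real n"

definition MM :: "nat \<Rightarrow> nat measure" where "MM n = measure_pmf (pmf_of_set {..<n})"

definition DD :: "nat \<Rightarrow> (nat \<Rightarrow> 'a::euclidean_space) \<Rightarrow> (real \<times> 'a) measure" where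
  "DD n z = distr (MM n) borel (\<lambda>i. (tt n i, z i))"

lemma tt_inj: "n > 0 \<Longrightarrow> tt n i = tt n j \<longleftrightarrow> i = j"
  by (simp add: tt_def divide_cancel_right)

lemma tt_le: "n > 0 \<Longrightarrow> tt n i \<le> tt n j \<longleftrightarrow> i \<le> j"
  by (simp add: tt_def divide_right_mono_neg divide_le_cancel)

lemma nn_int_MM: "n > 0 \<Longrightarrow> (\<integral>\<^sup>+ j. f j \<partial>MM n) = (\<Sum>j<n. f j) / of_nat n"
  unfolding MM_def by (subst nn_integral_pmf_of_set) auto

lemma AE_MM: "n > 0 \<Longrightarrow> (AE j in MM n. P j) \<longleftrightarrow> (\<forall>j<n. P j)"
  unfolding MM_def AE_measure_pmf_iff by (subst set_pmf_of_set) auto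

lemma nn_int_theta:
  assumes n: "n > 0"
  shows "(\<integral>\<^sup>+ \<tau>. f \<tau> \<partial>distr (MM n) borel (tt n)) = (\<Sum>i<n. f (tt n i)) / of_nat n"
proof -
  let ?T = "tt n ` {..<n}"
  have ae: "AE \<tau> in distr (MM n) borel (tt n). \<tau> \<in> ?T"
    by (subst AE_distr_iff) (auto simp: AE_MM[OF n] MM_def intro!: borel_closed finite_imp_closed)
  have "(\<integral>\<^sup>+ \<tau>. f \<tau> \<partial>distr (MM n) borel (tt n)) =
        (\<integral>\<^sup>+ \<tau>. (\<Sum>i<n. f (tt n i) * indicator {tt n i} \<tau>) \<partial>distr (MM n) borel (tt n))"
  proof (rule nn_integral_cong_AE)
    show "AE \<tau> in distr (MM n) borel (tt n). f \<tau> = (\<Sum>i<n. f (tt n i) * indicator {tt n i} \<tau>)"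
      using ae
    proof eventually_elim
      case (elim \<tau>)
      then obtain k where k: "k < n" "\<tau> = tt n k" by auto
      have "(\<Sum>i<n. f (tt n i) * indicator {tt n i} \<tau>) = (\<Sum>i<n. if i = k then f (tt n k) else 0)"
        using k by (intro sum.cong) (auto simp: tt_inj[OF n] indicator_def)
      then show ?case using k by simp
    qed
  qed
  also have "\<dots> = (\<integral>\<^sup>+ j. (\<Sum>i<n. f (tt n i) * indicator {tt n i} (tt n j)) \<partial>MM n)"
    by (rule nn_integral_distr) (simp add: MM_def, measurable)
  also have "\<dots> = (\<integral>\<^sup>+ j. f (tt n j) \<partial>MM n)"
  proof (rule nn_integral_cong_AE)
    show "AE x in MM n. (\<Sum>i<n. f (tt n i) * indicator {tt n i} (tt n x)) = f (tt n x)"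
    proof (subst AE_MM[OF n], intro allI impI)
      fix j assume j: "j < n"
      have "(\<Sum>i<n. f (tt n i) * indicator {tt n i} (tt n j)) = (\<Sum>i<n. if i = j then f (tt n j) else 0)"
        by (intro sum.cong) (auto simp: tt_inj[OF n] indicator_def)
      then show "(\<Sum>i<n. f (tt n i) * indicator {tt n i} (tt n j)) = f (tt n j)" using j by simp
    qed
  qed
  also have "\<dots> = (\<Sum>i<n. f (tt n i)) / of_nat n" by (rule nn_int_MM[OF n])
  finally show ?thesis .
qed

lemma sets_DD[simp]: "sets (DD n z) = sets borel" by (simp add: DD_def)

lemma emeasure_DD:
  assumes n: "n > 0" and A: "A \<in> sets borel"
  shows "emeasure (DD n z) A = (\<Sum>i<n. indicator A (tt n i, z i)) / of_nat n"
proof -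
  have "emeasure (DD n z) A = emeasure (MM n) ((\<lambda>i. (tt n i, z i)) -` A \<inter> space (MM n))"
    unfolding DD_def by (rule emeasure_distr) (auto simp: MM_def A)
  also have "\<dots> = (\<integral>\<^sup>+ j. indicator A (tt n j, z j) \<partial>MM n)"
    using nn_integral_indicator[of "(\<lambda>i. (tt n i, z i)) -` A" "MM n"] by (simp add: MM_def indicator_def)
  finally show ?thesis by (simp add: nn_int_MM[OF n])
qed

lemma fm_DD: "first_marginal (DD n z) = distr (MM n) borel (tt n)"
  unfolding first_marginal_def DD_def
  by (subst distr_distr) (auto simp: MM_def comp_def intro!: borel_measurable_continuous_onI continuous_intros)

definition kap :: "nat \<Rightarrow> (nat \<Rightarrow> 'a::euclidean_space) \<Rightarrow> real \<Rightarrow> 'a measure" where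
  "kap n z \<tau> = return borel (\<Sum>i<n. indicator {tt n i} \<tau> *\<^sub>R z i)"

lemma kap_at: fixes z :: "nat \<Rightarrow> 'a::real_vector" shows "n > 0 \<Longrightarrow> j < n \<Longrightarrow> (\<Sum>i<n. indicator {tt n i} (tt n j) *\<^sub>R z i) = z j"
proof -
  assume n: "n > 0" and j: "j < n"
  have "(\<Sum>i<n. indicator {tt n i} (tt n j) *\<^sub>R z i) = (\<Sum>i<n. if i = j then z j else 0)"
    by (intro sum.cong) (auto simp: tt_inj[OF n] indicator_def)
  then show ?thesis using j by simp
qed

lemma dis_exists:
  assumes n: "n > 0"
  shows "is_disintegration (DD n z) (kap n z)"
  unfolding is_disintegration_def
proof (intro conjI ballI allI)
  fix \<tau> show "sets (kap n z \<tau>) = sets borel" by (simp add: kap_def)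
  show "prob_space (kap n z \<tau>)" by (simp add: kap_def prob_space_return)
next
  fix B :: "'a set" assume B: "B \<in> sets borel"
  have "(\<lambda>\<tau>. emeasure (kap n z \<tau>) B) = (\<lambda>\<tau>. indicator B (\<Sum>i<n. indicator {tt n i} \<tau> *\<^sub>R z i))"
    using B by (simp add: kap_def)
  also have "\<dots> \<in> borel_measurable borel" using B by measurable
  finally show "(\<lambda>\<tau>. emeasure (kap n z \<tau>) B) \<in> borel_measurable borel" .
next
  fix S :: "real set" and B :: "'a set" assume S: "S \<in> sets borel" and B: "B \<in> sets borel"
  have "emeasure (DD n z) (S \<times> B) = (\<Sum>i<n. indicator (S \<times> B) (tt n i, z i)) / of_nat n"
    using S B by (intro emeasure_DD n borel_Times)
  also have "\<dots> = (\<Sum>i<n. indicator S (tt n i) * emeasure (kap n z (tt n i)) B) / of_nat n"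
  proof (intro arg_cong2[where f="(/)"] sum.cong refl)
    fix i assume i: "i \<in> {..<n}"
    then have "emeasure (kap n z (tt n i)) B = indicator B (z i)"
      using B unfolding kap_def by (subst kap_at[OF n]) auto
    then show "indicator (S \<times> B) (tt n i, z i) = indicator S (tt n i) * emeasure (kap n z (tt n i)) B"
      by (simp split: split_indicator)
  qed
  also have "\<dots> = (\<integral>\<^sup>+ \<tau>. indicator S \<tau> * emeasure (kap n z \<tau>) B \<partial>first_marginal (DD n z))"
    by (simp add: fm_DD nn_int_theta[OF n])
  finally show "emeasure (DD n z) (S \<times> B) = (\<integral>\<^sup>+ \<tau>. indicator S \<tau> * emeasure (kap n z \<tau>) B \<partial>first_marginal (DD n z))" .
qed

lemma sum_delta_tt:
  fixes f :: "nat \<Rightarrow> ennreal"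
  assumes n: "n > 0" and i: "i < n"
  shows "(\<Sum>j<n. indicator {tt n i} (tt n j) * f j) = f i"
proof -
  have "(\<Sum>j<n. indicator {tt n i} (tt n j) * f j) = (\<Sum>j<n. if j = i then f i else 0)"
    by (intro sum.cong) (auto simp: tt_inj[OF n] split: split_indicator)
  then show ?thesis using i by simp
qed

lemma ennreal_div_cancel:
  fixes a b :: ennreal
  assumes n: "n > 0" and eq: "a / of_nat n = b / of_nat n"
  shows "a = b"
proof -
  have "a = of_nat n * a / of_nat n" using n by (simp add: ennreal_mult_divide_eq mult.commute)
  also have "\<dots> = of_nat n * (a / of_nat n)" by (simp add: ennreal_times_divide)
  also have "\<dots> = of_nat n * (b / of_nat n)" by (simp add: eq)
  also have "\<dots> = of_nat n * b / of_nat n" by (simp add: ennreal_times_divide)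
  also have "\<dots> = b" using n by (simp add: ennreal_mult_divide_eq mult.commute)
  finally show ?thesis .
qed

lemma dis_unique:
  assumes n: "n > 0" and D: "is_disintegration (DD n z) \<kappa>" and i: "i < n"
  shows "\<kappa> (tt n i) = return borel (z i)"
proof -
  have Ds: "\<And>\<tau>. sets (\<kappa> \<tau>) = sets borel" using D unfolding is_disintegration_def by blast
  have De: "\<And>S B. S \<in> sets borel \<Longrightarrow> B \<in> sets borel \<Longrightarrow>
        emeasure (DD n z) (S \<times> B) = (\<integral>\<^sup>+ \<tau>. indicator S \<tau> * emeasure (\<kappa> \<tau>) B \<partial>(first_marginal (DD n z)))"
    using D unfolding is_disintegration_def by blast
  show ?thesis
proof (rule measure_eqI)
  show "sets (\<kappa> (tt n i)) = sets (return borel (z i))" using Ds by simp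
next
  fix B assume "B \<in> sets (\<kappa> (tt n i))"
  then have B: "B \<in> sets borel" using Ds by simp
  have "emeasure (DD n z) ({tt n i} \<times> B) = (\<integral>\<^sup>+ \<tau>. indicator {tt n i} \<tau> * emeasure (\<kappa> \<tau>) B \<partial>first_marginal (DD n z))"
    using B by (intro De) auto
  also have "\<dots> = emeasure (\<kappa> (tt n i)) B / of_nat n"
    unfolding fm_DD nn_int_theta[OF n] sum_delta_tt[OF n i] ..
  finally have 1: "emeasure (DD n z) ({tt n i} \<times> B) = emeasure (\<kappa> (tt n i)) B / of_nat n" .
  have "emeasure (DD n z) ({tt n i} \<times> B) = (\<Sum>j<n. indicator ({tt n i} \<times> B) (tt n j, z j)) / of_nat n"
    using B by (intro emeasure_DD n borel_Times borel_singleton sets.empty_sets)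
  also have "\<dots> = (\<Sum>j<n. indicator {tt n i} (tt n j) * indicator B (z j)) / of_nat n"
    unfolding indicator_times by simp
  also have "\<dots> = indicator B (z i) / of_nat n" unfolding sum_delta_tt[OF n i] ..
  finally have 2: "emeasure (DD n z) ({tt n i} \<times> B) = indicator B (z i) / of_nat n" .
  have "emeasure (\<kappa> (tt n i)) B = indicator B (z i)"
    by (rule ennreal_div_cancel[OF n]) (subst 1[symmetric], rule 2)
  then show "emeasure (\<kappa> (tt n i)) B = emeasure (return borel (z i)) B" using B by simp
qed
qed

lemma disint_DD: "n > 0 \<Longrightarrow> i < n \<Longrightarrow> disint (DD n z) (tt n i) = return borel (z i)"
proof -
  assume n: "n > 0" and i: "i < n"
  have "is_disintegration (DD n z) (disint (DD n z))"
    unfolding disint_def by (rule someI[where P="is_disintegration (DD n z)", OF dis_exists[OF n]])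
  then show ?thesis by (rule dis_unique[OF n _ i])
qed



lemma fst_borel: "(fst :: ('a::topological_space \<times> 'b::topological_space) \<Rightarrow> 'a) \<in> borel_measurable borel"
  by (intro borel_measurable_continuous_onI continuous_intros)
lemma snd_borel: "(snd :: ('a::topological_space \<times> 'b::topological_space) \<Rightarrow> 'b) \<in> borel_measurable borel"
  by (intro borel_measurable_continuous_onI continuous_intros)

lemma W_dirac:
  fixes a b :: "'a::euclidean_space"
  shows "wasserstein_pow 2 (return borel a) (return borel b) = ennreal (norm (a - b) ^ 2)"
proof -
  let ?f = "\<lambda>(x::'a, y::'a). ennreal (norm (x - y) powr 2)"
  have val: "(\<integral>\<^sup>+ (x, y). ennreal (norm (x - y) powr 2) \<partial>\<pi>) = ennreal (norm (a - b) ^ 2)"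
    if pi: "\<pi> \<in> couplings (return borel a) (return borel b)" for \<pi>
  proof -
    have s: "sets \<pi> = sets borel" and ps: "prob_space \<pi>"
      and m1: "distr \<pi> borel fst = return borel a" and m2: "distr \<pi> borel snd = return borel b"
      using pi by (auto simp: couplings_def)
    have mf: "fst \<in> measurable \<pi> borel" using fst_borel measurable_cong_sets[OF s refl] by auto
    have ms: "snd \<in> measurable \<pi> borel" using snd_borel measurable_cong_sets[OF s refl] by auto
    have "AE x in distr \<pi> borel fst. x = a" unfolding m1 by (subst AE_return) auto
    then have 1: "AE p in \<pi>. fst p = a" by (subst (asm) AE_distr_iff[OF mf]) auto
    have "AE x in distr \<pi> borel snd. x = b" unfolding m2 by (subst AE_return) auto
    then have 2: "AE p in \<pi>. snd p = b" by (subst (asm) AE_distr_iff[OF ms]) auto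
    have "(\<integral>\<^sup>+ (x, y). ennreal (norm (x - y) powr 2) \<partial>\<pi>) = (\<integral>\<^sup>+ p. ennreal (norm (a - b) ^ 2) \<partial>\<pi>)"
      using 1 2 by (intro nn_integral_cong_AE) (auto simp: powr_numeral)
    also have "\<dots> = ennreal (norm (a - b) ^ 2)"
      using prob_space.emeasure_space_1[OF ps] by simp
    finally show ?thesis .
  qed
  have c: "return borel (a, b) \<in> couplings (return borel a) (return borel b)"
    unfolding couplings_def
    by (auto simp: prob_space_return distr_return fst_borel snd_borel)
  have "wasserstein_pow 2 (return borel a) (return borel b) =
        (INF \<pi> \<in> couplings (return borel a) (return borel b). ennreal (norm (a - b) ^ 2))"
    unfolding wasserstein_pow_def by (intro INF_cong refl val)
  also have "\<dots> = ennreal (norm (a - b) ^ 2)" using c by (intro INF_const) auto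
  finally show ?thesis .
qed


lemma dp_DD:
  fixes z w :: "nat \<Rightarrow> 'a::euclidean_space"
  assumes n: "n > 0"
  shows "d_p 2 (DD n z) (DD n w) = ennreal (sqrt ((\<Sum>i<n. norm (z i - w i) ^ 2) / real n))"
proof -
  have "(\<integral>\<^sup>+ \<tau>. wasserstein_pow 2 (disint (DD n z) \<tau>) (disint (DD n w) \<tau>) \<partial>first_marginal (DD n z))
      = (\<Sum>i<n. wasserstein_pow 2 (disint (DD n z) (tt n i)) (disint (DD n w) (tt n i))) / of_nat n"
    unfolding fm_DD by (rule nn_int_theta[OF n])
  also have "\<dots> = (\<Sum>i<n. ennreal (norm (z i - w i) ^ 2)) / of_nat n"
    by (intro arg_cong2[where f="(/)"] sum.cong refl) (simp add: disint_DD[OF n] W_dirac)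
  also have "\<dots> = ennreal ((\<Sum>i<n. norm (z i - w i) ^ 2) / real n)"
    using n by (simp add: sum_ennreal ennreal_of_nat_eq_real_of_nat divide_ennreal sum_nonneg)
  finally have eq: "(\<integral>\<^sup>+ \<tau>. wasserstein_pow 2 (disint (DD n z) \<tau>) (disint (DD n w) \<tau>) \<partial>first_marginal (DD n z))
      = ennreal ((\<Sum>i<n. norm (z i - w i) ^ 2) / real n)" .
  have nn: "0 \<le> (\<Sum>i<n. norm (z i - w i) ^ 2) / real n" by (simp add: sum_nonneg)
  show ?thesis unfolding d_p_def eq
    using nn by (simp add: fm_DD enn_root_def powr_half_sqrt)
qed


lemma int_MM:
  fixes f :: "nat \<Rightarrow> 'b::{banach, second_countable_topology}"
  assumes n: "n > 0"
  shows "(\<integral>j. f j \<partial>MM n) = (1 / real n) *\<^sub>R (\<Sum>j<n. f j)"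
proof -
  have "(\<integral>j. f j \<partial>MM n) = (\<Sum>j<n. pmf (pmf_of_set {..<n}) j *\<^sub>R f j)"
    unfolding MM_def using n by (intro integral_measure_pmf) (auto simp: set_pmf_of_set lessThan_empty_iff)
  also have "\<dots> = (\<Sum>j<n. (1 / real n) *\<^sub>R f j)"
    using n by (intro sum.cong refl) (auto simp: lessThan_empty_iff)
  finally show ?thesis by (simp add: scaleR_sum_right)
qed

lemma mv_meas[measurable]:
  fixes V :: "real^'d^'k"
  assumes "f \<in> borel_measurable M"
  shows "(\<lambda>p. V *v f p) \<in> borel_measurable M"
  by (rule borel_measurable_continuous_on[OF linear_continuous_on[OF matrix_vector_mul_bounded_linear] assms])

definition Gexp :: "real^'d^'d \<Rightarrow> real^'d^'k \<Rightarrow> nat \<Rightarrow> (nat \<Rightarrow> real^'d) \<Rightarrow> real \<times> (real^'d) \<Rightarrow> real \<times> (real^'k)" where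
  "Gexp A V n z = (\<lambda>(s, x). (s, (1 / (\<Sum>i<n. indicator {tt n i..} s *\<^sub>R exp ((A *v x) \<bullet> z i))) *\<^sub>R
      (\<Sum>i<n. indicator {tt n i..} s *\<^sub>R (exp ((A *v x) \<bullet> z i) *\<^sub>R (V *v z i)))))"

lemma ind_swap: "indicator {..s} (c::real) = (indicator {c..} s :: real)"
  by (simp split: split_indicator)

lemma Gamma_DD:
  fixes A :: "real^'d^'d" and V :: "real^'d^'k"
  assumes n: "n > 0"
  shows "Gamma_mf A V (DD n z) = Gexp A V n z"
proof (intro ext, clarify)
  fix s :: real and x :: "real^'d"
  have i1: "integral\<^sup>L (DD n z) (\<lambda>(\<tau>, y). exp ((A *v x) \<bullet> y) * indicator {..s} \<tau>)
       = (1 / real n) * (\<Sum>i<n. exp ((A *v x) \<bullet> z i) * indicator {..s} (tt n i))"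
    unfolding DD_def
    apply (subst integral_distr)
      apply (simp add: MM_def)
     apply (unfold borel_prod[symmetric])
     apply measurable
    apply (simp add: int_MM[OF n])
    done
  have i2: "integral\<^sup>L (DD n z) (\<lambda>(\<tau>, y). (exp ((A *v x) \<bullet> y) * indicator {..s} \<tau>) *\<^sub>R (V *v y))
       = (1 / real n) *\<^sub>R (\<Sum>i<n. (exp ((A *v x) \<bullet> z i) * indicator {..s} (tt n i)) *\<^sub>R (V *v z i))"
    unfolding DD_def
    apply (subst integral_distr)
      apply (simp add: MM_def)
     apply (unfold borel_prod[symmetric])
     apply measurable
    apply (simp add: int_MM[OF n])
    done
  show "Gamma_mf A V (DD n z) (s, x) = Gexp A V n z (s, x)"
  proof -
    have a: "(\<Sum>i<n. exp ((A *v x) \<bullet> z i) * indicator {..s} (tt n i)) = (\<Sum>i<n. indicator {tt n i..} s *\<^sub>R exp ((A *v x) \<bullet> z i))"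
      by (intro sum.cong refl) (simp add: ind_swap)
    have b: "(\<Sum>i<n. (exp ((A *v x) \<bullet> z i) * indicator {..s} (tt n i)) *\<^sub>R (V *v z i))
           = (\<Sum>i<n. indicator {tt n i..} s *\<^sub>R (exp ((A *v x) \<bullet> z i) *\<^sub>R (V *v z i)))"
      by (intro sum.cong refl) (simp add: ind_swap)
    show ?thesis unfolding Gamma_mf_def Gexp_def case_prod_conv i1 i2 a b using n by simp
  qed
qed


lemma Gexp_meas: "Gexp A V n z \<in> borel_measurable borel"
  unfolding Gexp_def borel_prod[symmetric] by measurable

lemma mf_DD:
  fixes A :: "real^'d^'d" and V :: "real^'d^'k"
  assumes n: "n > 0"
  shows "mf_masked_sa A V (DD n z) = distr (MM n) borel (\<lambda>i. Gexp A V n z (tt n i, z i))"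
  unfolding mf_masked_sa_def Gamma_DD[OF n] unfolding DD_def
  by (subst distr_distr) (auto simp: MM_def comp_def Gexp_meas)

lemma sum_upto:
  fixes f :: "nat \<Rightarrow> 'b::real_vector"
  assumes n: "n > 0" and i: "i < n"
  shows "(\<Sum>j<n. indicator {tt n j..} (tt n i) *\<^sub>R f j) = (\<Sum>j\<le>i. f j)"
proof -
  have "(\<Sum>j<n. indicator {tt n j..} (tt n i) *\<^sub>R f j) = (\<Sum>j<n. (if j \<le> i then f j else 0))"
    by (intro sum.cong refl) (simp add: tt_le[OF n] split: split_indicator)
  also have "\<dots> = (\<Sum>j\<in>{..<n} \<inter> {j. j \<le> i}. f j)" by (simp add: sum.inter_restrict)
  also have "{..<n} \<inter> {j. j \<le> i} = {..i}" using i by auto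
  finally show ?thesis .
qed

lemma Gexp_at:
  fixes A :: "real^'d^'d" and V :: "real^'d^'k" and X :: "(real^'d) list"
  assumes n: "n > 0" and i: "i < n"
  shows "Gexp A V n (\<lambda>j. X ! j) (tt n i, X ! i) = (tt n i, V *v (\<Sum>j\<le>i. attn_P A X i j *\<^sub>R (X!j)))"
proof -
  let ?e = "\<lambda>j. exp ((A *v (X!i)) \<bullet> (X!j))"
  have s1: "(\<Sum>j<n. indicator {tt n j..} (tt n i) *\<^sub>R ?e j) = (\<Sum>j\<le>i. ?e j)"
    by (rule sum_upto[OF n i])
  have s2: "(\<Sum>j<n. indicator {tt n j..} (tt n i) *\<^sub>R (?e j *\<^sub>R (V *v X!j))) = (\<Sum>j\<le>i. ?e j *\<^sub>R (V *v X!j))"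
    by (rule sum_upto[OF n i])
  have "V *v (\<Sum>j\<le>i. attn_P A X i j *\<^sub>R (X!j)) = (\<Sum>j\<le>i. attn_P A X i j *\<^sub>R (V *v X!j))"
    by (simp add: linear_sum[OF matrix_vector_mul_linear] comp_def matrix_vector_mult_scaleR)
  also have "\<dots> = (1 / (\<Sum>j\<le>i. ?e j)) *\<^sub>R (\<Sum>j\<le>i. ?e j *\<^sub>R (V *v X!j))"
    by (simp add: attn_P_def scaleR_sum_right divide_inverse mult.commute)
  finally show ?thesis unfolding Gexp_def using s1 s2 by simp
qed


lemma frob_idx:
  fixes X Y :: "('a::real_normed_vector) list"
  assumes "length X = n" "length Y = n"
  shows "frob_norm (list_diff X Y) = sqrt (\<Sum>i<n. norm (X!i - Y!i)^2)"
  unfolding frob_norm_def list_diff_def using assms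
  by (simp add: sum_list_sum_nth atLeast0LessThan)

lemma masked_nth: "i < length X \<Longrightarrow> masked_sa A V X ! i = V *v (\<Sum>j\<le>i. attn_P A X i j *\<^sub>R (X!j))"
  by (simp add: masked_sa_def)

lemma mf_DD_list:
  fixes A :: "real^'d^'d" and V :: "real^'d^'k" and X :: "(real^'d) list"
  assumes n: "n > 0" and l: "length X = n"
  shows "mf_masked_sa A V (DD n (\<lambda>j. X ! j)) = DD n (\<lambda>j. masked_sa A V X ! j)"
  unfolding mf_DD[OF n] unfolding DD_def
proof (rule distr_cong_AE)
  show "AE i in MM n. Gexp A V n ((!) X) (tt n i, X ! i) = (tt n i, masked_sa A V X ! i)"
    unfolding AE_MM[OF n] using l by (auto simp: Gexp_at[OF n] masked_nth)
qed (auto simp: MM_def)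

lemma DD_supp:
  fixes z :: "nat \<Rightarrow> real^'d"
  assumes n: "n > 0" and z: "\<And>i. i < n \<Longrightarrow> z i \<in> cball 0 R"
  shows "DD n z \<in> prob_supp R"
proof -
  have "emeasure (DD n z) ({0..1} \<times> cball 0 R) = (\<Sum>i<n. indicator ({0..1} \<times> cball 0 R) (tt n i, z i)) / of_nat n"
    by (intro emeasure_DD n borel_Times borel_closed closed_atLeastAtMost closed_cball)
  also have "\<dots> = (\<Sum>i<n. 1) / of_nat n"
    using z by (intro arg_cong2[where f="(/)"] sum.cong refl) (auto simp: tt_def indicator_def)
  also have "\<dots> = 1" using n by (simp add: ennreal_divide_self ennreal_of_nat_eq_real_of_nat)
  finally show ?thesis unfolding prob_supp_def
    by (auto simp: DD_def MM_def intro!: measure_pmf.prob_space_distr)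
qed


theorem mainTheorem9:
  fixes R :: real and n :: nat
    and Q K :: "real^'d^'k" and V :: "real^'d^'k"
  assumes "R > 0"
  shows "lip_frob (masked_sa (attn_A Q K) V) (ball_tuples R n :: (real^'d) list set)
           \<le> lip_d2 (mf_masked_sa (attn_A Q K) V) (prob_supp R)"
  unfolding lip_frob_def
proof (rule SUP_least, clarify)
  fix X Y :: "(real^'d) list"
  assume X: "X \<in> ball_tuples R n" and Y: "Y \<in> ball_tuples R n" and ne: "X \<noteq> Y"
  let ?A = "attn_A Q K"
  let ?f = "masked_sa ?A V"
  have lX: "length X = n" and lY: "length Y = n" and sX: "set X \<subseteq> cball 0 R" and sY: "set Y \<subseteq> cball 0 R"
    using X Y by (auto simp: ball_tuples_def)
  have n: "n > 0" using lX lY ne by (cases n) auto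
  have lfX: "length (?f X) = n" and lfY: "length (?f Y) = n" using lX lY by (simp_all add: masked_sa_def)
  define z where "z = (\<lambda>j. X ! j)"
  define w where "w = (\<lambda>j. Y ! j)"
  define fz where "fz = (\<lambda>j. ?f X ! j)"
  define fw where "fw = (\<lambda>j. ?f Y ! j)"
  define Sa where "Sa = (\<Sum>i<n. norm (fz i - fw i)^2)"
  define Sb where "Sb = (\<Sum>i<n. norm (z i - w i)^2)"
  have Sa0: "Sa \<ge> 0" unfolding Sa_def by (simp add: sum_nonneg)
  have Sb0: "Sb > 0"
  proof -
    obtain i where i: "i < n" "X ! i \<noteq> Y ! i" using ne lX lY nth_equalityI by metis
    have "norm (z i - w i)^2 > 0" using i by (simp add: z_def w_def)
    moreover have "norm (z i - w i)^2 \<le> Sb" unfolding Sb_def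
      using i by (intro member_le_sum) auto
    ultimately show ?thesis by linarith
  qed
  have fa: "frob_norm (list_diff (?f X) (?f Y)) = sqrt Sa"
    unfolding Sa_def fz_def fw_def by (rule frob_idx[OF lfX lfY])
  have fb: "frob_norm (list_diff X Y) = sqrt Sb"
    unfolding Sb_def z_def w_def by (rule frob_idx[OF lX lY])
  have muX: "DD n z \<in> prob_supp R"
    using sX lX by (intro DD_supp n) (auto simp: z_def dest!: nth_mem)
  have muY: "DD n w \<in> prob_supp R"
    using sY lY by (intro DD_supp n) (auto simp: w_def dest!: nth_mem)
  have fm: "first_marginal (DD n z) = first_marginal (DD n w)" by (simp add: fm_DD)
  have d1: "d_p 2 (DD n z) (DD n w) = ennreal (sqrt (Sb / real n))"
    unfolding Sb_def by (rule dp_DD[OF n])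
  have d2: "d_p 2 (mf_masked_sa ?A V (DD n z)) (mf_masked_sa ?A V (DD n w)) = ennreal (sqrt (Sa / real n))"
    unfolding z_def w_def mf_DD_list[OF n lX] mf_DD_list[OF n lY] Sa_def fz_def fw_def by (rule dp_DD[OF n])
  have d0: "d_p 2 (DD n z) (DD n z) = ennreal (sqrt (0 / real n))"
    using dp_DD[OF n, of z z] by simp
  have neq: "DD n z \<noteq> DD n w"
  proof
    assume "DD n z = DD n w"
    then have "ennreal (sqrt (Sb / real n)) = ennreal (sqrt (0 / real n))" using d1 d0 by simp
    then show False using Sb0 n by simp
  qed
  have "ennreal (frob_norm (list_diff (?f X) (?f Y)) / frob_norm (list_diff X Y))
      = ennreal (sqrt (Sa / real n) / sqrt (Sb / real n))"
    unfolding fa fb using n by (simp add: real_sqrt_divide)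
  also have "\<dots> = d_p 2 (mf_masked_sa ?A V (DD n z)) (mf_masked_sa ?A V (DD n w)) / d_p 2 (DD n z) (DD n w)"
    unfolding d1 d2 using Sb0 n Sa0 by (subst divide_ennreal) auto
  also have "\<dots> \<le> lip_d2 (mf_masked_sa ?A V) (prob_supp R)"
    unfolding lip_d2_def
    by (rule SUP_upper2[where i="(DD n z, DD n w)"]) (use muX muY fm neq in auto)
  finally show "ennreal (frob_norm (list_diff (?f X) (?f Y)) / frob_norm (list_diff X Y))
      \<le> lip_d2 (mf_masked_sa ?A V) (prob_supp R)" .
qed

end
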